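(* Let $N\ge1$, $n,m\ge1$, $\kappa\ge0$, and let $\{(U_j,V_j)\}_{j=1}^N$ be a solution of $$\dot U_j=\frac{\kappa}{N}\sum_{k=1}^N\big(\langle V_j,V_k\rangle_FU_k-\langle V_k,V_j\rangle_FU_jU_k^\dagger U_j\big),\qquad \dot V_j=\frac{\kappa}{N}\sum_{k=1}^N\big(\langle U_j,U_k\rangle_FV_k-\langle U_k,U_j\rangle_FV_jV_k^\dagger V_j\big),$$ with $(U_j,V_j)(0)\in\mathbf U(n)\times\mathbf U(m)$. Then $$\frac{d}{dt}\mathcal D(\mathcal U)\le-2m\kappa\mathcal D(\mathcal U)+m\kappa\mathcal D(\mathcal U)^3+6\kappa\mathcal S(\mathcal V)\mathcal D(\mathcal U)+2\kappa\mathcal S(\mathcal V)\mathcal D(\mathcal U)^2+4\kappa\sqrt n\,\mathcal S(\mathcal V),$$ $$\frac{d}{dt}\mathcal D(\mathcal V)\le-2n\kappa\mathcal D(\mathcal V)+n\kappa\mathcal D(\mathcal V)^3+6\kappa\mathcal S(\mathcal U)\mathcal D(\mathcal V)+2\kappa\mathcal S(\mathcal U)\mathcal D(\mathcal V)^2+4\kappa\sqrt m\,\mathcal S(\mathcal U).$$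
   Context: $\langle A,B\rangle_F=\mathrm{tr}(A^\dagger B)$, $\|A\|_F=\sqrt{\langle A,A\rangle_F}$. $d_{ij}=\langle U_i,U_j\rangle_F$, $c_{ij}=\langle V_i,V_j\rangle_F$, $\mathcal D(\mathcal U)=\max_{i,j}\|U_i-U_j\|_F$, $\mathcal D(\mathcal V)=\max_{i,j}\|V_i-V_j\|_F$, $\mathcal S(\mathcal U)=\max_{i,j}|n-d_{ij}|$, $\mathcal S(\mathcal V)=\max_{i,j}|m-c_{ij}|$. Time derivatives of these maxima are understood as upper Dini derivatives (the paper writes them as ordinary derivatives). *)

theory Defs
  imports "HOL-Analysis.Analysis"
begin

text \<open>Complex square matrices of size n = CARD('n) are represented as complex^'n^'n.\<close>

definition adjoint :: "complex^'n^'n \<Rightarrow> complex^'n^'n" where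
  "adjoint A = (\<chi> i j. cnj (A $ j $ i))"

definition cscale :: "complex \<Rightarrow> complex^'n^'n \<Rightarrow> complex^'n^'n" where
  "cscale c A = (\<chi> i j. c * A $ i $ j)"

definition frob_inner :: "complex^'n^'n \<Rightarrow> complex^'n^'n \<Rightarrow> complex" where
  "frob_inner A B = (\<Sum>i\<in>UNIV. (adjoint A ** B) $ i $ i)"

definition frob_norm :: "complex^'n^'n \<Rightarrow> real" where
  "frob_norm A = sqrt (Re (frob_inner A A))"

definition unitary_mat :: "complex^'n^'n \<Rightarrow> bool" where
  "unitary_mat U \<longleftrightarrow> adjoint U ** U = mat 1 \<and> U ** adjoint U = mat 1"

definition diam :: "nat \<Rightarrow> (nat \<Rightarrow> complex^'n^'n) \<Rightarrow> real" where
  "diam N U = Max {frob_norm (U i - U j) | i j. i < N \<and> j < N}"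

definition Sdev :: "nat \<Rightarrow> (nat \<Rightarrow> complex^'n^'n) \<Rightarrow> real" where
  "Sdev N U = Max {cmod (of_nat CARD('n) - frob_inner (U i) (U j)) | i j. i < N \<and> j < N}"

definition upper_dini :: "(real \<Rightarrow> real) \<Rightarrow> real \<Rightarrow> ereal" where
  "upper_dini f t = Limsup (at_right 0) (\<lambda>h. ereal ((f (t + h) - f t) / h))"

end

theory Submission
  imports Defs
begin

lemma frob_inner_expand:
  "frob_inner (A::complex^'n^'n) B = (\<Sum>i\<in>UNIV. \<Sum>k\<in>UNIV. cnj (A$k$i) * B$k$i)"
  by (simp add: frob_inner_def adjoint_def matrix_matrix_mult_def)

lemma inner_cplx: "inner (z::complex) w = Re (cnj z * w)"
  by (simp add: inner_complex_def)

lemma inner_eq_Re_frob: "inner (A::complex^'n^'n) B = Re (frob_inner A B)"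
  unfolding frob_inner_expand inner_vec_def inner_cplx Re_sum
  by (rule sum.swap)

lemma frob_norm_eq: "frob_norm (A::complex^'n^'n) = norm A"
  by (simp add: frob_norm_def norm_eq_sqrt_inner inner_eq_Re_frob)

lemma frob_inner_cnj: "frob_inner (B::complex^'n^'n) A = cnj (frob_inner A B)"
  by (simp add: frob_inner_expand mult.commute)

lemma frob_inner_self: "frob_inner (A::complex^'n^'n) A = of_real ((norm A)^2)"
proof -
  have "Im (frob_inner A A) = 0"
    using frob_inner_cnj[of A A] by (metis cnj.sel(2) complex.expand equation_minus_iff neg_equal_zero) 
  moreover have "Re (frob_inner A A) = (norm A)^2"
    by (simp add: power2_norm_eq_inner inner_eq_Re_frob)
  ultimately show ?thesis by (simp add: complex_eq_iff)
qed

lemma frob_inner_zero_right[simp]: "frob_inner (A::complex^'n^'n) 0 = 0"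
  by (simp add: frob_inner_expand)
lemma adjoint_zero[simp]: "adjoint (0::complex^'n^'n) = 0"
  by (simp add: adjoint_def vec_eq_iff)
lemma frob_inner_add_right: "frob_inner (A::complex^'n^'n) (B + C) = frob_inner A B + frob_inner A C"
  by (simp add: frob_inner_expand distrib_left sum.distrib)
lemma frob_inner_diff_right: "frob_inner (A::complex^'n^'n) (B - C) = frob_inner A B - frob_inner A C"
  by (simp add: frob_inner_expand right_diff_distrib sum_subtractf)
lemma frob_inner_add_left: "frob_inner (A + B::complex^'n^'n) C = frob_inner A C + frob_inner B C"
  by (simp add: frob_inner_expand distrib_right sum.distrib)
lemma frob_inner_diff_left: "frob_inner (A - B::complex^'n^'n) C = frob_inner A C - frob_inner B C"
  by (simp add: frob_inner_expand left_diff_distrib sum_subtractf)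
lemma frob_inner_minus_right: "frob_inner (A::complex^'n^'n) (- B) = - frob_inner A B"
  by (simp add: frob_inner_expand sum_negf)
lemma frob_inner_cscale_right: "frob_inner (A::complex^'n^'n) (cscale c B) = c * frob_inner A B"
  by (simp add: frob_inner_expand cscale_def sum_distrib_left algebra_simps)
lemma cplx_scaleR: "r *\<^sub>R (z::complex) = of_real r * z"
  by (simp add: scaleR_conv_of_real)
lemma frob_inner_scaleR_right: "frob_inner (A::complex^'n^'n) (r *\<^sub>R B) = of_real r * frob_inner A B"
  by (simp add: frob_inner_expand sum_distrib_left algebra_simps cplx_scaleR)
lemma frob_inner_sum_right: "frob_inner (A::complex^'n^'n) (\<Sum>k\<in>K. B k) = (\<Sum>k\<in>K. frob_inner A (B k))"
  by (induction K rule: infinite_finite_induct)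
     (auto simp: frob_inner_add_right)

lemma adjoint_adjoint[simp]: "adjoint (adjoint A) = (A::complex^'n^'n)"
  by (simp add: adjoint_def vec_eq_iff)
lemma adjoint_mult: "adjoint (A ** B) = adjoint B ** adjoint (A::complex^'n^'n)"
  by (simp add: adjoint_def vec_eq_iff matrix_matrix_mult_def mult.commute)
lemma adjoint_mat1[simp]: "adjoint (mat 1 :: complex^'n^'n) = mat 1"
  by (simp add: adjoint_def vec_eq_iff mat_def)
lemma adjoint_diff: "adjoint (A - B) = adjoint A - adjoint (B::complex^'n^'n)"
  by (simp add: adjoint_def vec_eq_iff)
lemma adjoint_add: "adjoint (A + B) = adjoint A + adjoint (B::complex^'n^'n)"
  by (simp add: adjoint_def vec_eq_iff)
lemma adjoint_minus: "adjoint (- A) = - adjoint (A::complex^'n^'n)"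
  by (simp add: adjoint_def vec_eq_iff)
lemma adjoint_scaleR: "adjoint (r *\<^sub>R A) = r *\<^sub>R adjoint (A::complex^'n^'n)"
  by (simp add: adjoint_def vec_eq_iff cplx_scaleR)
lemma adjoint_cscale: "adjoint (cscale c A) = cscale (cnj c) (adjoint (A::complex^'n^'n))"
  by (simp add: adjoint_def cscale_def vec_eq_iff)
lemma adjoint_sum: "adjoint (\<Sum>k\<in>K. A k) = (\<Sum>k\<in>K. adjoint (A k::complex^'n^'n))"
  by (induction K rule: infinite_finite_induct) (auto simp: adjoint_add)

lemma frob_I1: "frob_inner (A::complex^'n^'n) (B ** C) = frob_inner (adjoint B ** A) C"
  unfolding frob_inner_def adjoint_mult adjoint_adjoint matrix_mul_assoc ..

definition mtr :: "complex^'n^'n \<Rightarrow> complex" where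
  "mtr X = (\<Sum>i\<in>UNIV. X $ i $ i)"

lemma mtr_comm: "mtr (X ** Y) = mtr (Y ** (X::complex^'n^'n))"
  unfolding mtr_def matrix_matrix_mult_def by (simp add: mult.commute, rule sum.swap)

lemma frob_mtr: "frob_inner A B = mtr (adjoint A ** B)"
  by (simp add: frob_inner_def mtr_def)

lemma frob_I3:
  fixes A B C D :: "complex^'n^'n"
  shows "frob_inner A (B ** adjoint C ** D) = frob_inner C (D ** adjoint A ** B)"
proof -
  have "frob_inner A (B ** adjoint C ** D) = mtr ((adjoint A ** B ** adjoint C) ** D)"
    by (simp add: frob_mtr matrix_mul_assoc)
  also have "\<dots> = mtr ((D ** adjoint A ** B) ** adjoint C)"
    by (simp add: mtr_comm[of _ D] matrix_mul_assoc)
  also have "\<dots> = frob_inner C (D ** adjoint A ** B)"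
    by (simp add: frob_mtr mtr_comm[of _ "adjoint C"])
  finally show ?thesis .
qed


lemma norm_sq_entries: "(norm (A::complex^'n^'n))^2 = (\<Sum>i\<in>UNIV. \<Sum>j\<in>UNIV. (cmod (A$i$j))^2)"
  unfolding power2_norm_eq_inner inner_vec_def
  by (simp add: inner_complex_def cmod_power2 power2_eq_square)

lemma norm_mult_le: "norm ((A::complex^'n^'n) ** (B::complex^'n^'n)) \<le> norm A * norm B"
proof -
  let ?a = "\<lambda>i. \<Sum>j\<in>UNIV. (cmod (A$i$j))^2"
  let ?b = "\<lambda>k. \<Sum>j\<in>UNIV. (cmod (B$j$k))^2"
  have 1: "(cmod ((A ** B)$i$k))^2 \<le> ?a i * ?b k" for i k
  proof -
    have "cmod ((A ** B)$i$k) \<le> (\<Sum>j\<in>UNIV. cmod (A$i$j) * cmod (B$j$k))"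
      unfolding matrix_matrix_mult_def
      by (simp, rule order_trans[OF norm_sum], simp add: norm_mult)
    hence "(cmod ((A ** B)$i$k))^2 \<le> (\<Sum>j\<in>UNIV. cmod (A$i$j) * cmod (B$j$k))^2"
      by (simp add: power_mono)
    also have "\<dots> \<le> ?a i * ?b k" by (rule Cauchy_Schwarz_ineq_sum)
    finally show ?thesis .
  qed
  have "(norm (A ** B))^2 \<le> (\<Sum>i\<in>UNIV. \<Sum>k\<in>UNIV. ?a i * ?b k)"
    by (subst norm_sq_entries) (intro sum_mono 1)
  also have "\<dots> = (\<Sum>i\<in>UNIV. ?a i) * (\<Sum>k\<in>UNIV. ?b k)"
    by (simp add: sum_product)
  also have "(\<Sum>k\<in>UNIV. ?b k) = (norm B)^2"
    unfolding norm_sq_entries by (rule sum.swap)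
  also have "(\<Sum>i\<in>UNIV. ?a i) = (norm A)^2"
    unfolding norm_sq_entries ..
  finally have "(norm (A ** B))^2 \<le> (norm A * norm B)^2" by (simp add: power_mult_distrib)
  thus ?thesis by (rule power2_le_imp_le) simp
qed

lemma norm_adjoint[simp]: "norm (adjoint (A::complex^'n^'n)) = norm A"
proof -
  have "(norm (adjoint A))^2 = (norm A)^2"
    unfolding norm_sq_entries by (simp add: adjoint_def, rule sum.swap)
  thus ?thesis by (simp add: power2_eq_iff_nonneg)
qed

lemma norm_cscale: "norm (cscale c (A::complex^'n^'n)) = cmod c * norm A"
proof -
  have "(norm (cscale c A))^2 = (cmod c * norm A)^2"
    unfolding norm_sq_entries power_mult_distrib
    by (simp add: cscale_def norm_mult power_mult_distrib sum_distrib_left)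
  thus ?thesis by (simp add: power2_eq_iff_nonneg)
qed

lemma cscale_of_real: "cscale (of_real r) A = r *\<^sub>R (A::complex^'n^'n)"
  by (simp add: cscale_def vec_eq_iff cplx_scaleR)

lemma frob_inner_cs: "cmod (frob_inner (A::complex^'n^'n) B) \<le> norm A * norm B"
proof (cases "frob_inner A B = 0")
  case True then show ?thesis by simp
next
  case False
  let ?z = "frob_inner A B"
  define w where "w = cnj ?z / of_real (cmod ?z)"
  have cw: "cmod w = 1" using False by (simp add: w_def norm_divide)
  have zz: "cnj ?z * ?z = of_real ((cmod ?z)^2)" by (metis complex_norm_square mult.commute of_real_power)
  have "frob_inner A (cscale w B) = of_real (cmod ?z)"
    using False by (simp add: frob_inner_cscale_right w_def zz power2_eq_square)
  hence "cmod ?z = inner A (cscale w B)" by (simp add: inner_eq_Re_frob)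
  also have "\<dots> \<le> norm A * norm (cscale w B)" by (rule norm_cauchy_schwarz)
  also have "\<dots> = norm A * norm B" by (simp add: norm_cscale cw)
  finally show ?thesis .
qed

lemma inner_le_frob: "Re (frob_inner (A::complex^'n^'n) B) \<le> norm A * norm B"
  using norm_cauchy_schwarz[of A B] by (simp add: inner_eq_Re_frob)

lemma mtr_mat1: "mtr (mat 1 :: complex^'n^'n) = of_nat CARD('n)"
  by (simp add: mtr_def mat_def)

lemma norm_left_unit:
  assumes "adjoint U ** U = mat 1" shows "norm (U ** (X::complex^'n^'n)) = norm X"
proof -
  have "frob_inner (U ** X) (U ** X) = frob_inner X X"
    by (simp add: frob_I1 adjoint_mult matrix_mul_assoc assms)
  hence "(norm (U ** X))^2 = (norm X)^2" unfolding frob_inner_self by (metis of_real_eq_iff)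
  thus ?thesis by (simp add: power2_eq_iff_nonneg)
qed

lemma norm_right_unit:
  assumes "U ** adjoint U = mat 1" shows "norm ((X::complex^'n^'n) ** U) = norm X"
proof -
  have "norm (X ** U) = norm (adjoint U ** adjoint X)" by (simp flip: adjoint_mult)
  also have "\<dots> = norm (adjoint X)" by (rule norm_left_unit) (simp add: assms)
  finally show ?thesis by simp
qed

lemma norm_unitary:
  assumes "adjoint U ** U = mat 1" shows "norm (U::complex^'n^'n) = sqrt (real CARD('n))"
proof -
  have "frob_inner U U = of_nat CARD('n)" by (simp add: frob_mtr assms mtr_mat1)
  hence "(norm U)^2 = real CARD('n)" unfolding frob_inner_self
    by (metis of_real_eq_iff of_real_of_nat_eq)
  thus ?thesis by (metis norm_ge_zero real_sqrt_unique)
qed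


lemma matrix_diff_ldistrib: "(A::complex^'n^'n) ** (B - C) = A ** B - A ** C"
  by (simp add: matrix_matrix_mult_def vec_eq_iff right_diff_distrib sum_subtractf)
lemma matrix_diff_rdistrib: "((A::complex^'n^'n) - B) ** C = A ** C - B ** C"
  by (simp add: matrix_matrix_mult_def vec_eq_iff left_diff_distrib sum_subtractf)
lemma matrix_add_rdistrib': "((A::complex^'n^'n) + B) ** C = A ** C + B ** C"
  by (simp add: matrix_matrix_mult_def vec_eq_iff distrib_right sum.distrib)
lemma matrix_neg_left: "(- (A::complex^'n^'n)) ** C = - (A ** C)"
  by (simp add: matrix_matrix_mult_def vec_eq_iff sum_negf)
lemma matrix_neg_right: "(A::complex^'n^'n) ** (- C) = - (A ** C)"
  by (simp add: matrix_matrix_mult_def vec_eq_iff sum_negf)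
lemma matrix_scaleR_left: "(r *\<^sub>R (A::complex^'n^'n)) ** C = r *\<^sub>R (A ** C)"
  by (simp add: matrix_matrix_mult_def vec_eq_iff cplx_scaleR sum_distrib_left mult.assoc)
lemma matrix_scaleR_right: "(A::complex^'n^'n) ** (r *\<^sub>R C) = r *\<^sub>R (A ** C)"
  by (simp add: matrix_matrix_mult_def vec_eq_iff cplx_scaleR sum_distrib_left algebra_simps)
lemma matrix_cscale_left: "(cscale c (A::complex^'n^'n)) ** C = cscale c (A ** C)"
  by (simp add: matrix_matrix_mult_def vec_eq_iff cscale_def sum_distrib_left mult.assoc)
lemma matrix_cscale_right: "(A::complex^'n^'n) ** (cscale c C) = cscale c (A ** C)"
  by (simp add: matrix_matrix_mult_def vec_eq_iff cscale_def sum_distrib_left algebra_simps)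
lemma matrix_sum_left: "(\<Sum>k\<in>K. A k :: complex^'n^'n) ** C = (\<Sum>k\<in>K. A k ** C)"
  by (induction K rule: infinite_finite_induct) (auto simp: matrix_add_rdistrib')
lemma matrix_sum_right: "(C::complex^'n^'n) ** (\<Sum>k\<in>K. A k) = (\<Sum>k\<in>K. C ** A k)"
  by (induction K rule: infinite_finite_induct) (auto simp: matrix_add_ldistrib)

lemmas mat_distribs = matrix_diff_ldistrib matrix_diff_rdistrib matrix_add_rdistrib' matrix_add_ldistrib
  matrix_neg_left matrix_neg_right

lemma mat_numeral_right: "(A::complex^'n^'n) ** (numeral w * mat 1) = numeral w * A"
proof -
  have "(numeral w * mat 1 :: complex^'n^'n) = mat (numeral w)"
    by (simp add: vec_eq_iff mat_def)
  thus ?thesis by (simp add: matrix_matrix_mult_def mat_def vec_eq_iff if_distrib if_distribR sum.delta' cong: if_cong)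
qed

lemma unit_simps:
  assumes "adjoint U ** U = mat 1" "U ** adjoint U = mat 1"
  shows "(X::complex^'n^'n) ** adjoint U ** U = X" "X ** U ** adjoint U = X"
  using assms by (simp_all flip: matrix_mul_assoc)

lemma unitary_mult: "unitary_mat A \<Longrightarrow> unitary_mat B \<Longrightarrow> unitary_mat ((A::complex^'n^'n) ** B)"
  unfolding unitary_mat_def adjoint_mult
  by (metis matrix_mul_assoc matrix_mul_rid)

lemma unitary_adjoint: "unitary_mat A \<Longrightarrow> unitary_mat (adjoint (A::complex^'n^'n))"
  unfolding unitary_mat_def by simp

lemma half_est:
  fixes X Uk D :: "complex^'n^'n"
  assumes X: "unitary_mat X" and Uk: "unitary_mat Uk"
  shows "- Re (frob_inner Uk (X ** (adjoint D ** D))) \<le> - ((norm D)^2) + (norm D)^2 * (norm (Uk - X))^2 / 2"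
proof -
  define W where "W = adjoint X ** Uk"
  have W: "unitary_mat W" unfolding W_def by (intro unitary_mult unitary_adjoint X Uk)
  have eq1: "frob_inner Uk (X ** (adjoint D ** D)) = frob_inner (D ** W) D"
    by (simp add: frob_I1 W_def matrix_mul_assoc adjoint_mult)
  define P where "P = D ** W"
  have nP: "norm P = norm D" unfolding P_def using W unitary_mat_def norm_right_unit by blast
  have e: "P - D = D ** (adjoint X ** (Uk - X))"
    using X by (simp add: P_def W_def matrix_diff_ldistrib unitary_mat_def)
  have ne: "norm (P - D) \<le> norm D * norm (Uk - X)"
  proof -
    have "norm (adjoint X ** (Uk - X)) = norm (Uk - X)"
      by (rule norm_left_unit) (use X in \<open>simp add: unitary_mat_def\<close>)
    thus ?thesis unfolding e using norm_mult_le[of D "adjoint X ** (Uk - X)"] by simp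
  qed
  have "(norm (P - D))^2 = (norm P)^2 - 2 * inner P D + (norm D)^2"
    by (simp add: power2_norm_eq_inner inner_diff_left inner_diff_right inner_commute)
  hence ip: "inner P D = (norm D)^2 - (norm (P - D))^2 / 2" using nP by (simp add: field_simps)
  have "(norm (P - D))^2 \<le> (norm D * norm (Uk - X))^2"
    using ne by (simp add: power_mono)
  thus ?thesis unfolding eq1 P_def[symmetric] inner_eq_Re_frob[symmetric] ip
    by (simp add: power_mult_distrib)
qed

lemma core_est:
  fixes Ui Uj Uk :: "complex^'n^'n"
  assumes Ui: "unitary_mat Ui" and Uj: "unitary_mat Uj" and Uk: "unitary_mat Uk"
  shows "Re (frob_inner (Ui - Uj) (Uj ** adjoint Uk ** Uj - Ui ** adjoint Uk ** Ui))
     \<le> - 2 * (norm (Ui - Uj))^2 + (norm (Ui - Uj))^2 * (norm (Uk - Ui))^2 / 2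
        + (norm (Ui - Uj))^2 * (norm (Uk - Uj))^2 / 2"
proof -
  define D where "D = Ui - Uj"
  have s1: "frob_inner D (Uj ** adjoint Uk ** Uj - Ui ** adjoint Uk ** Ui)
      = frob_inner Uk (Uj ** adjoint D ** Uj - Ui ** adjoint D ** Ui)"
    by (simp add: frob_inner_diff_right frob_I3)
  have s2: "Uj ** adjoint D ** Uj - Ui ** adjoint D ** Ui = - (Ui ** (adjoint D ** D)) - Uj ** (adjoint D ** D)"
    using Ui Uj unfolding unitary_mat_def D_def
    by (simp add: adjoint_diff mat_distribs matrix_mul_assoc unit_simps mat_numeral_right)
  have "Re (frob_inner D (Uj ** adjoint Uk ** Uj - Ui ** adjoint Uk ** Ui))
     = - Re (frob_inner Uk (Ui ** (adjoint D ** D))) - Re (frob_inner Uk (Uj ** (adjoint D ** D)))"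
    unfolding s1 s2 by (simp add: frob_inner_diff_right frob_inner_minus_right)
  also have "\<dots> \<le> (- ((norm D)^2) + (norm D)^2 * (norm (Uk - Ui))^2 / 2) + (- ((norm D)^2) + (norm D)^2 * (norm (Uk - Uj))^2 / 2)"
    using half_est[OF Ui Uk, of D] half_est[OF Uj Uk, of D] by linarith
  finally show ?thesis unfolding D_def by simp
qed


lemma cscale_split: "cscale c (X::complex^'n^'n) = cscale (c - of_real m) X + m *\<^sub>R X"
  by (simp add: cscale_def vec_eq_iff cplx_scaleR algebra_simps)

lemma term_split:
  fixes X Y Z :: "complex^'n^'n"
  shows "cscale a X - cscale b Y - (cscale c X - cscale d Z)
    = m *\<^sub>R (Z - Y) + (cscale (a - of_real m) X - cscale (b - of_real m) Y - cscale (c - of_real m) X + cscale (d - of_real m) Z)"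
  by (simp add: cscale_def vec_eq_iff cplx_scaleR algebra_simps)

lemma err_bound:
  fixes X Y Z :: "complex^'n^'n"
  assumes "cmod (a - of_real m) \<le> S" "cmod (b - of_real m) \<le> S" "cmod (c - of_real m) \<le> S" "cmod (d - of_real m) \<le> S"
    and "norm X = r" "norm Y = r" "norm Z = r"
  shows "norm (cscale (a - of_real m) X - cscale (b - of_real m) Y - cscale (c - of_real m) X + cscale (d - of_real m) Z) \<le> 4 * S * r"
proof -
  have r: "r \<ge> 0" using assms(5) by auto
  have "norm (cscale (a - of_real m) X - cscale (b - of_real m) Y - cscale (c - of_real m) X + cscale (d - of_real m) Z)
    \<le> norm (cscale (a - of_real m) X) + norm (cscale (b - of_real m) Y) + norm (cscale (c - of_real m) X) + norm (cscale (d - of_real m) Z)"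
    using norm_triangle_ineq[of "cscale (a - of_real m) X - cscale (b - of_real m) Y - cscale (c - of_real m) X" "cscale (d - of_real m) Z"]
      norm_triangle_ineq4[of "cscale (a - of_real m) X - cscale (b - of_real m) Y" "cscale (c - of_real m) X"]
      norm_triangle_ineq4[of "cscale (a - of_real m) X" "cscale (b - of_real m) Y"]
    by linarith
  also have "\<dots> \<le> S * r + S * r + S * r + S * r"
    unfolding norm_cscale assms(5-7)
    using mult_right_mono[OF assms(1) r] mult_right_mono[OF assms(2) r] mult_right_mono[OF assms(3) r] mult_right_mono[OF assms(4) r]
    by linarith
  finally show ?thesis by simp
qed

context
  fixes U :: "nat \<Rightarrow> complex^'n^'n" and c :: "nat \<Rightarrow> nat \<Rightarrow> complex"
    and N :: nat and \<kappa> m S :: real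
  assumes unit: "\<And>k. k < N \<Longrightarrow> unitary_mat (U k)"
    and N: "N \<ge> 1" and kap: "\<kappa> \<ge> 0" and m: "m \<ge> 0"
    and cS: "\<And>a b. a < N \<Longrightarrow> b < N \<Longrightarrow> cmod (c a b - of_real m) \<le> S"
begin

definition "Fv j = (\<kappa> / real N) *\<^sub>R (\<Sum>k<N. cscale (c j k) (U k) - cscale (c k j) (U j ** adjoint (U k) ** U j))"

definition "Ek i j k = (cscale (c i k - of_real m) (U k) - cscale (c k i - of_real m) (U i ** adjoint (U k) ** U i)
     - cscale (c j k - of_real m) (U k) + cscale (c k j - of_real m) (U j ** adjoint (U k) ** U j))"

lemma Fv_diff: "Fv i - Fv j = (\<kappa> / real N) *\<^sub>R (\<Sum>k<N. m *\<^sub>R (U j ** adjoint (U k) ** U j - U i ** adjoint (U k) ** U i) + Ek i j k)"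
  unfolding Fv_def Ek_def scaleR_diff_right[symmetric] sum_subtractf[symmetric]
  by (rule arg_cong[where f="scaleR _"], rule sum.cong, rule refl, rule term_split)

lemma Ek_bound: "i < N \<Longrightarrow> j < N \<Longrightarrow> k < N \<Longrightarrow> norm (Ek i j k) \<le> 4 * S * sqrt (real CARD('n))"
proof -
  assume a: "i < N" "j < N" "k < N"
  have u: "unitary_mat (U i)" "unitary_mat (U j)" "unitary_mat (U k)" using a unit by auto
  have n1: "norm (U k) = sqrt (real CARD('n))" using u(3) norm_unitary unitary_mat_def by blast
  have n2: "norm (U i ** adjoint (U k) ** U i) = sqrt (real CARD('n))"
    using unitary_mult[OF unitary_mult[OF u(1) unitary_adjoint[OF u(3)]] u(1)] norm_unitary unitary_mat_def by blast
  have n3: "norm (U j ** adjoint (U k) ** U j) = sqrt (real CARD('n))"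
    using unitary_mult[OF unitary_mult[OF u(2) unitary_adjoint[OF u(3)]] u(2)] norm_unitary unitary_mat_def by blast
  show ?thesis unfolding Ek_def
    by (rule err_bound[OF cS cS cS cS n1 n2 n3]) (use a in auto)
qed

lemma pair_inner:
  assumes i: "i < N" and j: "j < N"
    and Dmax: "\<And>a b. a < N \<Longrightarrow> b < N \<Longrightarrow> norm (U a - U b) \<le> norm (U i - U j)"
  shows "inner (U i - U j) (Fv i - Fv j) \<le> norm (U i - U j) * (- 2 * m * \<kappa> * norm (U i - U j)
      + m * \<kappa> * norm (U i - U j) ^ 3 + 4 * \<kappa> * sqrt (real CARD('n)) * S)"
proof -
  define D where "D = norm (U i - U j)"
  define r where "r = sqrt (real CARD('n))"
  have D0: "D \<ge> 0" by (simp add: D_def)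
  have each: "inner (U i - U j) (m *\<^sub>R (U j ** adjoint (U k) ** U j - U i ** adjoint (U k) ** U i) + Ek i j k)
      \<le> m * (- 2 * D^2 + D^4) + D * (4 * S * r)" if k: "k < N" for k
  proof -
    have c: "Re (frob_inner (U i - U j) (U j ** adjoint (U k) ** U j - U i ** adjoint (U k) ** U i))
      \<le> - 2 * D^2 + D^2 * (norm (U k - U i))^2 / 2 + D^2 * (norm (U k - U j))^2 / 2"
      unfolding D_def by (rule core_est) (use unit i j k in auto)
    have "(norm (U k - U i))^2 \<le> D^2" "(norm (U k - U j))^2 \<le> D^2"
      using Dmax[OF k i] Dmax[OF k j] by (auto simp: D_def intro!: power_mono)
    hence "D^2 * (norm (U k - U i))^2 / 2 + D^2 * (norm (U k - U j))^2 / 2 \<le> D^2 * D^2 / 2 + D^2 * D^2 / 2"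
      by (intro add_mono divide_right_mono mult_left_mono) auto
    with c have c2: "inner (U i - U j) (U j ** adjoint (U k) ** U j - U i ** adjoint (U k) ** U i) \<le> - 2 * D^2 + D^4"
      unfolding inner_eq_Re_frob by (simp add: power2_eq_square power4_eq_xxxx)
    have e: "inner (U i - U j) (Ek i j k) \<le> D * (4 * S * r)"
      using norm_cauchy_schwarz[of "U i - U j" "Ek i j k"] Ek_bound[OF i j k] D0
      unfolding D_def r_def by (meson mult_left_mono order_trans)
    show ?thesis unfolding inner_add_right inner_scaleR_right
      using mult_left_mono[OF c2 m] e by linarith
  qed
  have "inner (U i - U j) (Fv i - Fv j) = (\<kappa> / real N) * (\<Sum>k<N. inner (U i - U j) (m *\<^sub>R (U j ** adjoint (U k) ** U j - U i ** adjoint (U k) ** U i) + Ek i j k))"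
    unfolding Fv_diff inner_scaleR_right inner_sum_right ..
  also have "\<dots> \<le> (\<kappa> / real N) * (\<Sum>k<N. m * (- 2 * D^2 + D^4) + D * (4 * S * r))"
    using kap by (intro mult_left_mono sum_mono each) auto
  also have "\<dots> = \<kappa> * (m * (- 2 * D^2 + D^4) + D * (4 * S * r))"
    using N by simp
  also have "\<dots> = D * (- 2 * m * \<kappa> * D + m * \<kappa> * D ^ 3 + 4 * \<kappa> * r * S)"
    by (simp add: algebra_simps power2_eq_square power3_eq_cube power4_eq_xxxx)
  finally show ?thesis unfolding D_def r_def .
qed

lemma pair_zero:
  assumes i: "i < N" and j: "j < N" and eq: "U i = U j"
  shows "norm (Fv i - Fv j) \<le> 4 * \<kappa> * sqrt (real CARD('n)) * S"
proof -
  have "norm (Fv i - Fv j) = (\<kappa> / real N) * norm (\<Sum>k<N. Ek i j k)"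
    unfolding Fv_diff eq using kap by simp
  also have "\<dots> \<le> (\<kappa> / real N) * (\<Sum>k<N. 4 * S * sqrt (real CARD('n)))"
    using kap by (intro mult_left_mono order_trans[OF norm_sum] sum_mono Ek_bound i j) auto
  also have "\<dots> = 4 * \<kappa> * sqrt (real CARD('n)) * S" using N by simp
  finally show ?thesis .
qed

end


lemma shift_right:
  assumes "(F \<longlongrightarrow> L) (at_right t)"
  shows "((\<lambda>h. F (t + h)) \<longlongrightarrow> L) (at_right (0::real))"
proof -
  have "filterlim F (nhds L) (filtermap (\<lambda>x. x + t) (at_right 0))"
    using assms at_right_to_0[of t] by simp
  hence "filterlim (\<lambda>h. F (h + t)) (nhds L) (at_right 0)"
    by (simp add: filterlim_filtermap)
  thus ?thesis by (simp add: add.commute)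
qed

lemma vd_quot:
  fixes g :: "real \<Rightarrow> 'a::real_normed_vector"
  assumes g: "(g has_vector_derivative g') (at t within {0..})" and t: "t \<ge> 0"
  shows "((\<lambda>h. (g (t + h) - g t) /\<^sub>R h) \<longlongrightarrow> g') (at_right 0)"
proof -
  have "((\<lambda>y. (1 / norm (y - t)) *\<^sub>R (g y - (g t + (y - t) *\<^sub>R g'))) \<longlongrightarrow> 0) (at t within {0..})"
    using g unfolding has_vector_derivative_def has_derivative_within by simp
  hence "((\<lambda>y. (1 / norm (y - t)) *\<^sub>R (g y - (g t + (y - t) *\<^sub>R g'))) \<longlongrightarrow> 0) (at_right t)"
    by (rule tendsto_within_subset) (use t in auto)
  moreover have "eventually (\<lambda>y. (1 / norm (y - t)) *\<^sub>R (g y - (g t + (y - t) *\<^sub>R g')) = (g y - g t) /\<^sub>R (y - t) - g') (at_right t)"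
    using eventually_at_right_less[of t]
    by eventually_elim (simp add: scaleR_add_right scaleR_diff_right inverse_eq_divide)
  ultimately have "((\<lambda>y. (g y - g t) /\<^sub>R (y - t) - g') \<longlongrightarrow> 0) (at_right t)"
    using tendsto_cong by force
  hence "((\<lambda>y. (g y - g t) /\<^sub>R (y - t)) \<longlongrightarrow> g') (at_right t)"
    using Lim_null by blast
  from shift_right[OF this] show ?thesis by simp
qed

lemma vd_cont:
  fixes g :: "real \<Rightarrow> 'a::real_normed_vector"
  assumes g: "(g has_vector_derivative g') (at t within {0..})" and t: "t \<ge> 0"
  shows "((\<lambda>h. g (t + h)) \<longlongrightarrow> g t) (at_right 0)"
proof -
  have "(g \<longlongrightarrow> g t) (at t within {0..})"
    using has_vector_derivative_continuous[OF g] t by (simp add: continuous_within)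
  hence "(g \<longlongrightarrow> g t) (at_right t)"
    by (rule tendsto_within_subset) (use t in auto)
  thus ?thesis by (rule shift_right)
qed

lemma norm_quot_nonzero:
  fixes g :: "real \<Rightarrow> 'a::real_inner"
  assumes g: "(g has_vector_derivative g') (at t within {0..})" and t: "t \<ge> 0" and nz: "g t \<noteq> 0"
  shows "((\<lambda>h. (norm (g (t + h)) - norm (g t)) / h) \<longlongrightarrow> inner (g t) g' / norm (g t)) (at_right 0)"
proof -
  have "((\<lambda>s. norm (g s)) has_derivative (\<lambda>x. inner (x *\<^sub>R g') (sgn (g t)))) (at t within {0..})"
    using has_derivative_compose[OF g[unfolded has_vector_derivative_def] has_derivative_norm[OF nz]] .
  hence "((\<lambda>s. norm (g s)) has_vector_derivative (inner (g t) g' / norm (g t))) (at t within {0..})"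
    unfolding has_vector_derivative_def
    by (simp add: sgn_div_norm inner_commute divide_inverse ac_simps)
  from vd_quot[OF this t] show ?thesis by (simp add: divide_inverse mult.commute)
qed

lemma norm_quot_zero:
  fixes g :: "real \<Rightarrow> 'a::real_normed_vector"
  assumes g: "(g has_vector_derivative g') (at t within {0..})" and t: "t \<ge> 0" and z: "g t = 0"
  shows "((\<lambda>h. (norm (g (t + h)) - norm (g t)) / h) \<longlongrightarrow> norm g') (at_right 0)"
proof -
  have "((\<lambda>h. norm ((g (t + h) - g t) /\<^sub>R h)) \<longlongrightarrow> norm g') (at_right 0)"
    by (rule tendsto_norm[OF vd_quot[OF g t]])
  moreover have "eventually (\<lambda>h. norm ((g (t + h) - g t) /\<^sub>R h) = (norm (g (t + h)) - norm (g t)) / h) (at_right 0)"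
    using eventually_at_right_less[of 0] by eventually_elim (simp add: z divide_inverse mult.commute)
  ultimately show ?thesis using tendsto_cong by force
qed

lemma dini_max_bound:
  fixes f :: "nat \<Rightarrow> nat \<Rightarrow> real \<Rightarrow> real" and N :: nat and t R :: real
  assumes N: "N \<ge> 1"
    and cont: "\<And>i j. i < N \<Longrightarrow> j < N \<Longrightarrow> ((\<lambda>h. f i j (t + h)) \<longlongrightarrow> f i j t) (at_right 0)"
    and act: "\<And>i j. i < N \<Longrightarrow> j < N \<Longrightarrow> f i j t = Max {f a b t | a b. a < N \<and> b < N} \<Longrightarrow>
       \<exists>d. ((\<lambda>h. (f i j (t + h) - f i j t) / h) \<longlongrightarrow> d) (at_right 0) \<and> d \<le> R"
  shows "upper_dini (\<lambda>s. Max {f i j s | i j. i < N \<and> j < N}) t \<le> ereal R"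
proof -
  define F where "F s = Max {f i j s | i j. i < N \<and> j < N}" for s
  have seteq: "{f i j s | i j. i < N \<and> j < N} = (\<lambda>(i, j). f i j s) ` ({..<N} \<times> {..<N})" for s
    by auto
  have fin: "finite {f i j s | i j. i < N \<and> j < N}" for s unfolding seteq by auto
  have ne: "{f i j s | i j. i < N \<and> j < N} \<noteq> {}" for s
  proof -
    have "f 0 0 s \<in> {f i j s | i j. i < N \<and> j < N}" using N by (auto intro!: exI[of _ 0])
    thus ?thesis by blast
  qed
  have le: "f i j s \<le> F s" if "i < N" "j < N" for i j s
    unfolding F_def using fin that by (intro Max_ge) auto
  have key: "eventually (\<lambda>h. (F (t + h) - F t) / h \<le> R + e) (at_right 0)" if e: "e > 0" for e
  proof -
    have pair: "eventually (\<lambda>h. f i j (t + h) \<le> F t + h * (R + e)) (at_right 0)"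
      if ij: "(i, j) \<in> {..<N} \<times> {..<N}" for i j
    proof (cases "f i j t = F t")
      case True
      then obtain d where d: "((\<lambda>h. (f i j (t + h) - f i j t) / h) \<longlongrightarrow> d) (at_right 0)" "d \<le> R"
        using act ij unfolding F_def by auto
      have "eventually (\<lambda>h. (f i j (t + h) - f i j t) / h < d + e) (at_right 0)"
        using order_tendstoD(2)[OF d(1)] e by simp
      thus ?thesis using eventually_at_right_less[of 0]
      proof eventually_elim
        case (elim h)
        hence "f i j (t + h) - f i j t < h * (d + e)" by (simp add: pos_divide_less_eq mult.commute)
        moreover have "h * (d + e) \<le> h * (R + e)" using elim d(2) by simp
        ultimately show ?case using True by simp
      qed
    next
      case False
      have "f i j t \<le> F t" using le ij by auto
      hence lt: "f i j t < F t" using False by linarith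
      define g where "g = F t - f i j t"
      have g: "g > 0" using lt g_def by simp
      have "eventually (\<lambda>h. f i j (t + h) < f i j t + g / 2) (at_right 0)"
        using order_tendstoD(2)[OF cont] ij g by auto
      moreover have "eventually (\<lambda>h. h * \<bar>R + e\<bar> < g / 2) (at_right 0)"
      proof -
        have "((\<lambda>h. h * \<bar>R + e\<bar>) \<longlongrightarrow> 0 * \<bar>R + e\<bar>) (at_right (0::real))"
          by (intro tendsto_intros)
        from order_tendstoD(2)[OF this, of "g / 2"] g show ?thesis by simp
      qed
      ultimately show ?thesis using eventually_at_right_less[of 0]
      proof eventually_elim
        case (elim h)
        have "h * (- \<bar>R + e\<bar>) \<le> h * (R + e)" using elim(3)
          by (intro mult_left_mono) auto
        hence "- (h * \<bar>R + e\<bar>) \<le> h * (R + e)" by simp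
        thus ?case using elim g_def by linarith
      qed
    qed
    have "eventually (\<lambda>h. \<forall>p\<in>{..<N} \<times> {..<N}. f (fst p) (snd p) (t + h) \<le> F t + h * (R + e)) (at_right 0)"
      by (rule eventually_ball_finite) (auto intro: pair)
    thus ?thesis using eventually_at_right_less[of 0]
    proof eventually_elim
      case (elim h)
      have "F (t + h) \<le> F t + h * (R + e)"
        unfolding F_def[of "t + h"] using fin ne elim(1) by (subst Max_le_iff) auto
      thus ?case using elim(2) by (simp add: pos_divide_le_eq mult.commute)
    qed
  qed
  show ?thesis
    unfolding upper_dini_def F_def[symmetric]
  proof (rule ereal_le_epsilon2)
    fix e :: real assume e: "e > 0"
    have "Limsup (at_right 0) (\<lambda>h. ereal ((F (t + h) - F t) / h)) \<le> ereal (R + e)"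
      by (rule Limsup_bounded) (use key[OF e] in \<open>auto elim: eventually_mono\<close>)
    thus "Limsup (at_right 0) (\<lambda>h. ereal ((F (t + h) - F t) / h)) \<le> ereal R + ereal e" by simp
  qed
qed


lemma bb_mult: "bounded_bilinear (\<lambda>(A::complex^'n^'n) (B::complex^'n^'n). A ** B)"
proof
  show "\<exists>K. \<forall>(a::complex^'n^'n) (b::complex^'n^'n). norm (a ** b) \<le> norm a * norm b * K"
    by (rule exI[of _ 1]) (auto intro: norm_mult_le)
qed (simp_all add: matrix_add_rdistrib' matrix_add_ldistrib matrix_scaleR_left matrix_scaleR_right)

lemma bl_adjoint: "bounded_linear (adjoint :: complex^'n^'n \<Rightarrow> complex^'n^'n)"
  by (rule bounded_linear_intro[where K=1]) (simp_all add: adjoint_add adjoint_scaleR)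

lemma cont_bound:
  fixes W :: "nat \<Rightarrow> real \<Rightarrow> 'a::real_normed_vector"
  assumes d: "\<And>j t. j < N \<Longrightarrow> t \<ge> 0 \<Longrightarrow> (W j has_vector_derivative W' j t) (at t within {0..})"
  shows "\<exists>B. \<forall>t\<in>{0..T}. \<forall>j<N. norm (W j t) \<le> B"
proof -
  have c: "continuous_on {0..T} (W j)" if "j < N" for j
    unfolding continuous_on_eq_continuous_within
  proof
    fix t assume "t \<in> {0..T}"
    have "continuous (at t within {0..}) (W j)"
      by (rule has_vector_derivative_continuous[OF d[OF that]]) (use \<open>t \<in> {0..T}\<close> in auto)
    thus "continuous (at t within {0..T}) (W j)"
      by (rule continuous_within_subset) auto
  qed
  define phi where "phi t = (\<Sum>j<N. norm (W j t))" for t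
  have "continuous_on {0..T} phi" unfolding phi_def
    by (intro continuous_intros c) auto
  hence "compact (phi ` {0..T})" by (rule compact_continuous_image) simp
  then obtain B where B: "\<forall>x\<in>phi ` {0..T}. norm x \<le> B"
    using compact_imp_bounded bounded_pos by metis
  have "norm (W j t) \<le> B" if "t \<in> {0..T}" "j < N" for t j
  proof -
    have "norm (W j t) \<le> phi t" unfolding phi_def
      using that by (intro member_le_sum) auto
    also have "\<dots> \<le> B" using B that by force
    finally show ?thesis .
  qed
  thus ?thesis by blast
qed

lemma gronwall0:
  fixes g g' :: "real \<Rightarrow> real" and L T :: real
  assumes d: "\<And>t. t \<ge> 0 \<Longrightarrow> (g has_real_derivative g' t) (at t within {0..})"
    and le: "\<And>t. 0 \<le> t \<Longrightarrow> t \<le> T \<Longrightarrow> g' t \<le> L * g t"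
    and g0: "g 0 = 0" and nn: "\<And>t. g t \<ge> 0" and T: "T \<ge> 0"
  shows "g T = 0"
proof -
  define h where "h t = g t * exp (- L * t)" for t
  have dh: "(h has_real_derivative (g' t * exp (- L * t) + g t * (exp (- L * t) * (- L)))) (at t within {0..})"
    if "t \<ge> 0" for t
  proof -
    have dg: "(g has_real_derivative g' t) (at t within {0..})" by (rule d[OF that])
    show ?thesis unfolding h_def
      by (rule derivative_eq_intros dg refl | simp)+
  qed
  have "h T \<le> h 0"
  proof (rule DERIV_nonpos_imp_decreasing_open[OF T])
    fix x assume x: "0 < x" "x < T"
    have "(h has_real_derivative (g' x * exp (- L * x) + g x * (exp (- L * x) * (- L)))) (at x within {0<..})"
      by (rule has_field_derivative_subset[OF dh]) (use x in auto)
    hence "(h has_real_derivative (g' x * exp (- L * x) + g x * (exp (- L * x) * (- L)))) (at x)"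
      using at_within_open[of x "{0<..}"] x by simp
    moreover have "g' x * exp (- L * x) + g x * (exp (- L * x) * (- L)) \<le> 0"
    proof -
      have "g' x * exp (- L * x) \<le> L * g x * exp (- L * x)" using le[of x] x by simp
      thus ?thesis by (simp add: algebra_simps)
    qed
    ultimately show "\<exists>y. (h has_real_derivative y) (at x) \<and> y \<le> 0" by blast
  next
    show "continuous_on {0..T} h"
      unfolding continuous_on_eq_continuous_within
    proof
      fix t assume t: "t \<in> {0..T}"
      have "continuous (at t within {0..}) h"
        using DERIV_continuous[OF dh] t by auto
      thus "continuous (at t within {0..T}) h" by (rule continuous_within_subset) auto
    qed
  qed
  hence "h T \<le> 0" by (simp add: h_def g0)
  moreover have "h T \<ge> 0" unfolding h_def using nn by simp
  ultimately have "h T = 0" by simp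
  thus ?thesis unfolding h_def by simp
qed

lemma preserve:
  fixes U :: "nat \<Rightarrow> real \<Rightarrow> complex^'n^'n" and c :: "nat \<Rightarrow> nat \<Rightarrow> real \<Rightarrow> complex"
  assumes kap: "\<kappa> \<ge> 0"
    and dU: "\<And>j t. j < N \<Longrightarrow> t \<ge> 0 \<Longrightarrow>
      (U j has_vector_derivative
        ((\<kappa> / real N) *\<^sub>R (\<Sum>k<N. cscale (c j k t) (U k t)
          - cscale (c k j t) (U j t ** adjoint (U k t) ** U j t)))) (at t within {0..})"
    and csym: "\<And>j k t. j < N \<Longrightarrow> k < N \<Longrightarrow> t \<ge> 0 \<Longrightarrow> c k j t = cnj (c j k t)"
    and cb: "\<And>T. \<exists>B. \<forall>t\<in>{0..T}. \<forall>j<N. \<forall>k<N. cmod (c j k t) \<le> B"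
    and init: "\<And>j. j < N \<Longrightarrow> unitary_mat (U j 0)"
    and j: "j < N" and T: "T \<ge> 0"
  shows "unitary_mat (U j T)"
proof -
  define X where "X t = (\<kappa> / real N) *\<^sub>R (\<Sum>k<N. cscale (c j k t) (U k t))" for t
  define U' where "U' t = (\<kappa> / real N) *\<^sub>R (\<Sum>k<N. cscale (c j k t) (U k t)
          - cscale (c k j t) (U j t ** adjoint (U k t) ** U j t))" for t
  have U'eq: "U' t = X t - U j t ** adjoint (X t) ** U j t" if t: "t \<ge> 0" for t
  proof -
    have "adjoint (X t) = (\<kappa> / real N) *\<^sub>R (\<Sum>k<N. cscale (c k j t) (adjoint (U k t)))"
      unfolding X_def adjoint_scaleR adjoint_sum adjoint_cscale
      using csym[OF j _ t] by (intro arg_cong[where f="scaleR _"] sum.cong) auto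
    hence "U j t ** adjoint (X t) ** U j t = (\<kappa> / real N) *\<^sub>R (\<Sum>k<N. cscale (c k j t) (U j t ** adjoint (U k t) ** U j t))"
      by (simp add: matrix_scaleR_right matrix_scaleR_left matrix_sum_right matrix_sum_left matrix_cscale_right matrix_cscale_left)
    thus ?thesis unfolding U'_def X_def by (simp add: sum_subtractf scaleR_diff_right)
  qed
  define E where "E t = U j t ** adjoint (U j t) - mat 1" for t
  define E' where "E' t = U j t ** adjoint (U' t) + U' t ** adjoint (U j t)" for t
  have dE: "(E has_vector_derivative E' t) (at t within {0..})" if t: "t \<ge> 0" for t
  proof -
    have d1: "(U j has_vector_derivative U' t) (at t within {0..})" using dU[OF j t] unfolding U'_def .
    have d2: "((\<lambda>s. adjoint (U j s)) has_vector_derivative adjoint (U' t)) (at t within {0..})"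
      by (rule bounded_linear.has_vector_derivative[OF bl_adjoint d1])
    have "((\<lambda>s. U j s ** adjoint (U j s)) has_vector_derivative E' t) (at t within {0..})"
      unfolding E'_def by (rule bounded_bilinear.has_vector_derivative[OF bb_mult d1 d2])
    hence "((\<lambda>s. U j s ** adjoint (U j s) - mat 1) has_vector_derivative E' t - 0) (at t within {0..})"
      by (intro has_vector_derivative_diff) auto
    thus ?thesis unfolding E_def by simp
  qed
  have E'eq: "E' t = - (U j t ** adjoint (X t) ** E t) - E t ** X t ** adjoint (U j t)" if t: "t \<ge> 0" for t
    unfolding E'_def E_def U'eq[OF t]
    by (simp add: adjoint_diff adjoint_mult mat_distribs matrix_mul_assoc algebra_simps)
  define g where "g t = inner (E t) (E t)" for t
  define g' where "g' t = inner (E t) (E' t) + inner (E' t) (E t)" for t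
  have dg: "(g has_real_derivative g' t) (at t within {0..})" if t: "t \<ge> 0" for t
    unfolding has_real_derivative_iff_has_vector_derivative g_def g'_def
    by (rule bounded_bilinear.has_vector_derivative[OF bounded_bilinear_inner dE[OF t] dE[OF t]])
  obtain BU where BU: "\<forall>t\<in>{0..T}. \<forall>j<N. norm (U j t) \<le> BU"
    using cont_bound[of N U, OF dU] by blast
  obtain BC where BC: "\<forall>t\<in>{0..T}. \<forall>j<N. \<forall>k<N. cmod (c j k t) \<le> BC"
    using cb by blast
  have BU0: "BU \<ge> 0" using BU j T by (meson atLeastAtMost_iff norm_ge_zero order_trans order_refl)
  have BC0: "BC \<ge> 0" using BC j T by (meson atLeastAtMost_iff norm_ge_zero order_trans order_refl)
  have nX: "norm (X t) \<le> \<kappa> * (BC * BU)" if t: "t \<in> {0..T}" for t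
  proof -
    have "norm (X t) = (\<kappa> / real N) * norm (\<Sum>k<N. cscale (c j k t) (U k t))"
      unfolding X_def using kap by simp
    also have "\<dots> \<le> (\<kappa> / real N) * (\<Sum>k<N. BC * BU)"
    proof (intro mult_left_mono order_trans[OF norm_sum] sum_mono)
      fix k assume "k \<in> {..<N}"
      thus "norm (cscale (c j k t) (U k t)) \<le> BC * BU"
        unfolding norm_cscale using BC BU t j BC0 by (intro mult_mono) auto
    qed (use kap in auto)
    also have "\<dots> = \<kappa> * (BC * BU)" using j by simp
    finally show ?thesis .
  qed
  have gle: "g' t \<le> (4 * BU * (\<kappa> * (BC * BU))) * g t" if t: "0 \<le> t" "t \<le> T" for t
  proof -
    have tt: "t \<in> {0..T}" using t by auto
    have nU: "norm (U j t) \<le> BU" using BU tt j by auto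
    have "norm (E' t) \<le> norm (U j t ** adjoint (X t) ** E t) + norm (E t ** X t ** adjoint (U j t))"
      unfolding E'eq[OF t(1)] by (metis minus_diff_eq norm_minus_cancel norm_triangle_ineq4 uminus_add_conv_diff)
    also have "\<dots> \<le> norm (U j t) * norm (X t) * norm (E t) + norm (E t) * norm (X t) * norm (U j t)"
    proof (rule add_mono)
      show "norm (U j t ** adjoint (X t) ** E t) \<le> norm (U j t) * norm (X t) * norm (E t)"
        using norm_mult_le[of "U j t ** adjoint (X t)" "E t"] norm_mult_le[of "U j t" "adjoint (X t)"]
        by (simp add: mult_right_mono order_trans)
      show "norm (E t ** X t ** adjoint (U j t)) \<le> norm (E t) * norm (X t) * norm (U j t)"
        using norm_mult_le[of "E t ** X t" "adjoint (U j t)"] norm_mult_le[of "E t" "X t"]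
        by (simp add: mult_right_mono order_trans)
    qed
    also have "\<dots> = 2 * (norm (U j t) * norm (X t)) * norm (E t)" by simp
    also have "\<dots> \<le> 2 * (BU * (\<kappa> * (BC * BU))) * norm (E t)"
      using nU nX[OF tt] BU0 by (intro mult_right_mono mult_left_mono mult_mono) auto
    finally have nE': "norm (E' t) \<le> 2 * (BU * (\<kappa> * (BC * BU))) * norm (E t)" .
    have "g' t = 2 * inner (E t) (E' t)" unfolding g'_def by (simp add: inner_commute)
    also have "\<dots> \<le> 2 * (norm (E t) * norm (E' t))" using norm_cauchy_schwarz by simp
    also have "\<dots> \<le> 2 * (norm (E t) * (2 * (BU * (\<kappa> * (BC * BU))) * norm (E t)))"
      using nE' by (intro mult_left_mono) auto
    also have "\<dots> = (4 * BU * (\<kappa> * (BC * BU))) * g t"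
      unfolding g_def power2_norm_eq_inner[symmetric] by (simp add: power2_eq_square)
    finally show ?thesis .
  qed
  have g0: "g 0 = 0" using init[OF j] unfolding g_def E_def unitary_mat_def by simp
  have "g T = 0"
    by (rule gronwall0[OF dg gle g0 _ T]) (auto simp: g_def)
  hence "U j T ** adjoint (U j T) = mat 1" unfolding g_def E_def by simp
  thus ?thesis unfolding unitary_mat_def using matrix_left_right_inverse by blast
qed


lemma half_main:
  fixes N :: nat and \<kappa> :: real
    and U :: "nat \<Rightarrow> real \<Rightarrow> complex^'n^'n"
    and V :: "nat \<Rightarrow> real \<Rightarrow> complex^'m^'m"
  assumes N: "N \<ge> 1" and kappa: "\<kappa> \<ge> 0"
    and dU: "\<And>j t. j < N \<Longrightarrow> t \<ge> 0 \<Longrightarrow>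
      (U j has_vector_derivative
        ((\<kappa> / real N) *\<^sub>R (\<Sum>k<N.
            cscale (frob_inner (V j t) (V k t)) (U k t)
          - cscale (frob_inner (V k t) (V j t)) (U j t ** adjoint (U k t) ** U j t))))
      (at t within {0..})"
    and unit: "\<And>j. j < N \<Longrightarrow> unitary_mat (U j t)" and t: "t \<ge> 0"
  shows "upper_dini (\<lambda>s. diam N (\<lambda>j. U j s)) t \<le> ereal (
        - 2 * real CARD('m) * \<kappa> * diam N (\<lambda>j. U j t)
        + real CARD('m) * \<kappa> * diam N (\<lambda>j. U j t) ^ 3
        + 6 * \<kappa> * Sdev N (\<lambda>j. V j t) * diam N (\<lambda>j. U j t)
        + 2 * \<kappa> * Sdev N (\<lambda>j. V j t) * diam N (\<lambda>j. U j t) ^ 2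
        + 4 * \<kappa> * sqrt (real CARD('n)) * Sdev N (\<lambda>j. V j t))"
proof -
  define S where "S = Sdev N (\<lambda>j. V j t)"
  define m where "m = real CARD('m)"
  define c where "c a b = frob_inner (V a t) (V b t)" for a b
  define D where "D = diam N (\<lambda>j. U j t)"
  define R where "R = - 2 * m * \<kappa> * D + m * \<kappa> * D ^ 3 + 6 * \<kappa> * S * D + 2 * \<kappa> * S * D ^ 2
        + 4 * \<kappa> * sqrt (real CARD('n)) * S"
  have finS: "finite {cmod (of_nat CARD('m) - frob_inner (V i t) (V j t)) | i j. i < N \<and> j < N}"
  proof -
    have "{cmod (of_nat CARD('m) - frob_inner (V i t) (V j t)) | i j. i < N \<and> j < N}
       = (\<lambda>(i, j). cmod (of_nat CARD('m) - frob_inner (V i t) (V j t))) ` ({..<N} \<times> {..<N})" by auto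
    thus ?thesis by simp
  qed
  have cS: "cmod (c a b - of_real m) \<le> S" if "a < N" "b < N" for a b
  proof -
    have "cmod (c a b - of_real m) = cmod (of_nat CARD('m) - frob_inner (V a t) (V b t))"
      unfolding c_def m_def by (simp add: norm_minus_commute)
    also have "\<dots> \<le> S" unfolding S_def Sdev_def using that finS by (intro Max_ge) auto
    finally show ?thesis .
  qed
  have S0: "S \<ge> 0" using cS[of 0 0] N by (meson norm_ge_zero order_trans less_le_trans zero_less_one le_less)
  have m0: "m \<ge> 0" by (simp add: m_def)
  have Fv_eq: "Fv (\<lambda>k. U k t) c N \<kappa> j = (\<kappa> / real N) *\<^sub>R (\<Sum>k<N.
            cscale (frob_inner (V j t) (V k t)) (U k t)
          - cscale (frob_inner (V k t) (V j t)) (U j t ** adjoint (U k t) ** U j t))" for j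
    by (simp add: Fv_def[where U="\<lambda>k. U k t" and c=c and N=N and \<kappa>=\<kappa> and m=m and S=S, OF unit N kappa m0 cS] c_def)
  have diam_eq: "diam N W = Max {norm (W i - W j) | i j. i < N \<and> j < N}" for W :: "nat \<Rightarrow> complex^'n^'n"
    by (simp add: diam_def frob_norm_eq)
  have finD: "finite {norm (U i t - U j t) | i j. i < N \<and> j < N}"
  proof -
    have "{norm (U i t - U j t) | i j. i < N \<and> j < N}
       = (\<lambda>(i, j). norm (U i t - U j t)) ` ({..<N} \<times> {..<N})" by auto
    thus ?thesis by simp
  qed
  have Dge: "norm (U a t - U b t) \<le> D" if "a < N" "b < N" for a b
    unfolding D_def diam_eq using that finD by (intro Max_ge) auto
  have dD: "((\<lambda>s. U i s - U j s) has_vector_derivative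
      (Fv (\<lambda>k. U k t) c N \<kappa> i - Fv (\<lambda>k. U k t) c N \<kappa> j)) (at t within {0..})"
    if "i < N" "j < N" for i j
    unfolding Fv_eq by (intro has_vector_derivative_diff dU that t)
  have "upper_dini (\<lambda>s. Max {norm (U i s - U j s) | i j. i < N \<and> j < N}) t \<le> ereal R"
  proof (rule dini_max_bound[OF N])
    fix i j assume ij: "i < N" "j < N"
    show "((\<lambda>h. norm (U i (t + h) - U j (t + h))) \<longlongrightarrow> norm (U i t - U j t)) (at_right 0)"
      using tendsto_norm[OF vd_cont[OF dD[OF ij] t]] .
  next
    fix i j assume ij: "i < N" "j < N"
      and act: "norm (U i t - U j t) = Max {norm (U a t - U b t) | a b. a < N \<and> b < N}"
    have act': "norm (U i t - U j t) = D" unfolding D_def diam_eq act ..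
    show "\<exists>d. ((\<lambda>h. (norm (U i (t + h) - U j (t + h)) - norm (U i t - U j t)) / h) \<longlongrightarrow> d) (at_right 0) \<and> d \<le> R"
    proof (cases "U i t - U j t = 0")
      case False
      have D0: "D > 0" using False act' by auto
      have "inner (U i t - U j t) (Fv (\<lambda>k. U k t) c N \<kappa> i - Fv (\<lambda>k. U k t) c N \<kappa> j)
         \<le> D * (- 2 * m * \<kappa> * D + m * \<kappa> * D ^ 3 + 4 * \<kappa> * sqrt (real CARD('n)) * S)"
        using pair_inner[of N "\<lambda>k. U k t" \<kappa> m c S i j] unit N kappa m0 cS ij Dge act' by auto
      hence "inner (U i t - U j t) (Fv (\<lambda>k. U k t) c N \<kappa> i - Fv (\<lambda>k. U k t) c N \<kappa> j) / norm (U i t - U j t)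
          \<le> - 2 * m * \<kappa> * D + m * \<kappa> * D ^ 3 + 4 * \<kappa> * sqrt (real CARD('n)) * S"
        using D0 act' by (simp add: pos_divide_le_eq mult.commute)
      also have "\<dots> \<le> R" unfolding R_def using kappa S0 D0 by simp
      finally show ?thesis
        using norm_quot_nonzero[OF dD[OF ij] t False] by blast
    next
      case True
      have "norm (Fv (\<lambda>k. U k t) c N \<kappa> i - Fv (\<lambda>k. U k t) c N \<kappa> j) \<le> 4 * \<kappa> * sqrt (real CARD('n)) * S"
        using pair_zero[of N "\<lambda>k. U k t" \<kappa> m c S i j] unit N kappa m0 cS ij True by auto
      moreover have "D = 0" using True act' by simp
      ultimately have "norm (Fv (\<lambda>k. U k t) c N \<kappa> i - Fv (\<lambda>k. U k t) c N \<kappa> j) \<le> R"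
        unfolding R_def by simp
      thus ?thesis using norm_quot_zero[OF dD[OF ij] t True] by blast
    qed
  qed
  thus ?thesis unfolding diam_eq R_def D_def S_def m_def by simp
qed

lemma cb_lemma:
  fixes V :: "nat \<Rightarrow> real \<Rightarrow> complex^'m^'m"
  assumes d: "\<And>j t. j < N \<Longrightarrow> t \<ge> 0 \<Longrightarrow> (V j has_vector_derivative V' j t) (at t within {0..})"
  shows "\<exists>B. \<forall>t\<in>{0..T}. \<forall>j<N. \<forall>k<N. cmod (frob_inner (V j t) (V k t)) \<le> B"
proof -
  obtain B where B: "\<forall>t\<in>{0..T}. \<forall>j<N. norm (V j t) \<le> B"
    using cont_bound[of N V V', OF d] by blast
  have "cmod (frob_inner (V j t) (V k t)) \<le> B * B" if "t \<in> {0..T}" "j < N" "k < N" for t j k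
  proof -
    have b1: "norm (V j t) \<le> B" and b2: "norm (V k t) \<le> B" using B that by auto
    have "0 \<le> B" using b1 norm_ge_zero order_trans by blast
    hence "norm (V j t) * norm (V k t) \<le> B * B" using b1 b2 by (intro mult_mono) auto
    thus ?thesis using frob_inner_cs[of "V j t" "V k t"] by linarith
  qed
  thus ?thesis by blast
qed

theorem lemmaA1:
  fixes N :: nat and \<kappa> :: real
    and U :: "nat \<Rightarrow> real \<Rightarrow> complex^'n^'n"
    and V :: "nat \<Rightarrow> real \<Rightarrow> complex^'m^'m"
  assumes N: "N \<ge> 1" and kappa: "\<kappa> \<ge> 0"
    and dU: "\<And>j t. j < N \<Longrightarrow> t \<ge> 0 \<Longrightarrow>
      (U j has_vector_derivative
        ((\<kappa> / real N) *\<^sub>R (\<Sum>k<N.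
            cscale (frob_inner (V j t) (V k t)) (U k t)
          - cscale (frob_inner (V k t) (V j t)) (U j t ** adjoint (U k t) ** U j t))))
      (at t within {0..})"
    and dV: "\<And>j t. j < N \<Longrightarrow> t \<ge> 0 \<Longrightarrow>
      (V j has_vector_derivative
        ((\<kappa> / real N) *\<^sub>R (\<Sum>k<N.
            cscale (frob_inner (U j t) (U k t)) (V k t)
          - cscale (frob_inner (U k t) (U j t)) (V j t ** adjoint (V k t) ** V j t))))
      (at t within {0..})"
    and init: "\<And>j. j < N \<Longrightarrow> unitary_mat (U j 0) \<and> unitary_mat (V j 0)"
  shows "\<forall>t\<ge>0.
      upper_dini (\<lambda>s. diam N (\<lambda>j. U j s)) t \<le> ereal (
        - 2 * real CARD('m) * \<kappa> * diam N (\<lambda>j. U j t)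
        + real CARD('m) * \<kappa> * diam N (\<lambda>j. U j t) ^ 3
        + 6 * \<kappa> * Sdev N (\<lambda>j. V j t) * diam N (\<lambda>j. U j t)
        + 2 * \<kappa> * Sdev N (\<lambda>j. V j t) * diam N (\<lambda>j. U j t) ^ 2
        + 4 * \<kappa> * sqrt (real CARD('n)) * Sdev N (\<lambda>j. V j t))
    \<and> upper_dini (\<lambda>s. diam N (\<lambda>j. V j s)) t \<le> ereal (
        - 2 * real CARD('n) * \<kappa> * diam N (\<lambda>j. V j t)
        + real CARD('n) * \<kappa> * diam N (\<lambda>j. V j t) ^ 3
        + 6 * \<kappa> * Sdev N (\<lambda>j. U j t) * diam N (\<lambda>j. V j t)
        + 2 * \<kappa> * Sdev N (\<lambda>j. U j t) * diam N (\<lambda>j. V j t) ^ 2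
        + 4 * \<kappa> * sqrt (real CARD('m)) * Sdev N (\<lambda>j. U j t))"
proof -
  have uU: "unitary_mat (U j t)" if "j < N" "t \<ge> 0" for j t
    by (rule preserve[where c="\<lambda>j k t. frob_inner (V j t) (V k t)", OF kappa dU frob_inner_cnj cb_lemma[OF dV] conjunct1[OF init] that])
  have uV: "unitary_mat (V j t)" if "j < N" "t \<ge> 0" for j t
    by (rule preserve[where c="\<lambda>j k t. frob_inner (U j t) (U k t)", OF kappa dV frob_inner_cnj cb_lemma[OF dU] conjunct2[OF init] that])
  show ?thesis
  proof (intro allI impI conjI)
    fix t :: real assume t: "t \<ge> 0"
    show "upper_dini (\<lambda>s. diam N (\<lambda>j. U j s)) t \<le> ereal (
        - 2 * real CARD('m) * \<kappa> * diam N (\<lambda>j. U j t)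
        + real CARD('m) * \<kappa> * diam N (\<lambda>j. U j t) ^ 3
        + 6 * \<kappa> * Sdev N (\<lambda>j. V j t) * diam N (\<lambda>j. U j t)
        + 2 * \<kappa> * Sdev N (\<lambda>j. V j t) * diam N (\<lambda>j. U j t) ^ 2
        + 4 * \<kappa> * sqrt (real CARD('n)) * Sdev N (\<lambda>j. V j t))"
      by (rule half_main[OF N kappa dU _ t]) (use uU t in auto)
    show "upper_dini (\<lambda>s. diam N (\<lambda>j. V j s)) t \<le> ereal (
        - 2 * real CARD('n) * \<kappa> * diam N (\<lambda>j. V j t)
        + real CARD('n) * \<kappa> * diam N (\<lambda>j. V j t) ^ 3
        + 6 * \<kappa> * Sdev N (\<lambda>j. U j t) * diam N (\<lambda>j. V j t)
        + 2 * \<kappa> * Sdev N (\<lambda>j. U j t) * diam N (\<lambda>j. V j t) ^ 2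
        + 4 * \<kappa> * sqrt (real CARD('m)) * Sdev N (\<lambda>j. U j t))"
      by (rule half_main[OF N kappa dV _ t]) (use uV t in auto)
  qed
qed

end
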